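(* Let $\lambda$ be Lebesgue measure on $[0,1]$ and let $T:[0,1]\to[0,1]$ be an invertible, ergodic, $\lambda$-preserving transformation which is rigid rank 1, with associated numbers $n_k$ and sets $A_k$ (as in the context). Let $\mathcal{R}_k=\bigcup_{i=0}^{n_k-1}T^iA_k$ and $$\tilde{\mathcal{R}}_k=\bigcup_{i=0}^{n_k-1}T^i\big(A_k\cap T^{-n_k}A_k\cap T^{-2n_k}A_k\cap T^{n_k}A_k\cap T^{2n_k}A_k\big).$$ Let $\sigma$ be a self-joining of $([0,1],T,\lambda)$ with disintegration $(\sigma_x)_{x\in[0,1]}$ over the first coordinate, chosen so that $\sigma_{Tx}(TE)=\sigma_x(E)$ for every $x\in[0,1]$ and every Borel $E\subset[0,1]$. For $0\le \ell<n_k$, $x\in T^\ell A_k$ and $0\le i<n_k$, let $a_i\in\{0,\dots,n_k-1\}$ be the integer with $a_i\equiv i+\ell \pmod{n_k}$ and set $c_i(x)=\sigma_x(T^{a_i}A_k\cap\mathcal{R}_k)$. Then for every $0\le\ell<n_k$, every $x\in T^\ell A_k$ and every integer $i$ with $-\ell\le i<n_k-\ell$, $$\sum_{j=0}^{n_k-1}|c_j(x)-c_j(T^ix)|\le 2\sigma_x(\tilde{\mathcal{R}}_k^c).$$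
   Context: $T$ is called rigid rank 1 if there exist positive integers $n_j$ and measurable sets $A_j\subset[0,1]$ such that: (1) $\lim_{j\to\infty}\lambda\big(\bigcup_{i=0}^{n_j-1}T^iA_j\big)=1$; (2) the sets $A_j,TA_j,\dots,T^{n_j-1}A_j$ are pairwise disjoint; (3) $\lim_{j\to\infty}\lambda(T^{n_j}A_j\cap A_j)/\lambda(A_j)=1$; (4) for every $\varepsilon>0$ there exist, for each $j$, metric balls $B^{(j)}_0,\dots,B^{(j)}_{n_j-1}\subset[0,1]$ of diameter at most $\varepsilon$ such that $\lim_{j\to\infty}\sum_{i=0}^{n_j-1}\lambda(T^iA_j\setminus B^{(j)}_i)=0$. A self-joining of $([0,1],T,\lambda)$ is a $T\times T$-invariant Borel probability measure on $[0,1]\times[0,1]$ both of whose marginals equal $\lambda$; $\sigma_x$ is regarded as a probability measure on $[0,1]$. By disjointness of the levels $T^\ell A_k$, the index $\ell$ with $x\in T^\ell A_k$ is unique, so $c_i(x)$ is well defined (and $T^ix\in T^{\ell+i}A_k$ for $-\ell\le i<n_k-\ell$, so $c_j(T^ix)$ is defined with $\ell+i$ in place of $\ell$). *)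

theory Defs
  imports "HOL-Probability.Probability"
begin

definition lam :: "real measure" where
  "lam = restrict_space lborel {0..1}"

definition Tz :: "(real \<Rightarrow> real) \<Rightarrow> int \<Rightarrow> real \<Rightarrow> real" where
  "Tz T i = (if 0 \<le> i then T ^^ nat i else (inv_into {0..1} T) ^^ nat (- i))"

definition invertible_mpt :: "(real \<Rightarrow> real) \<Rightarrow> bool" where
  "invertible_mpt T \<longleftrightarrow>
     bij_betw T {0..1} {0..1} \<and>
     T \<in> lam \<rightarrow>\<^sub>M lam \<and> inv_into {0..1} T \<in> lam \<rightarrow>\<^sub>M lam \<and>
     distr lam lam T = lam"

definition ergodic :: "(real \<Rightarrow> real) \<Rightarrow> bool" where
  "ergodic T \<longleftrightarrow> (\<forall>E \<in> sets lam. T -` E \<inter> {0..1} = E \<longrightarrow>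
                      measure lam E = 0 \<or> measure lam E = 1)"

definition ball01 :: "real \<Rightarrow> real \<Rightarrow> real set" where
  "ball01 c r = {y \<in> {0..1}. dist c y < r}"

definition rigid_rank1 :: "(real \<Rightarrow> real) \<Rightarrow> (nat \<Rightarrow> nat) \<Rightarrow> (nat \<Rightarrow> real set) \<Rightarrow> bool" where
  "rigid_rank1 T n A \<longleftrightarrow>
     (\<forall>j. 0 < n j \<and> A j \<in> sets lam) \<and>
     (\<lambda>j. measure lam (\<Union>i<n j. (T ^^ i) ` A j)) \<longlonglongrightarrow> 1 \<and>
     (\<forall>j. disjoint_family_on (\<lambda>i. (T ^^ i) ` A j) {..<n j}) \<and>
     (\<lambda>j. measure lam ((T ^^ n j) ` A j \<inter> A j) / measure lam (A j)) \<longlonglongrightarrow> 1 \<and>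
     (\<forall>\<epsilon>>0. \<exists>B :: nat \<Rightarrow> nat \<Rightarrow> real set.
        (\<forall>j i. i < n j \<longrightarrow> (\<exists>c r. c \<in> {0..1} \<and> B j i = ball01 c r) \<and> diameter (B j i) \<le> \<epsilon>) \<and>
        (\<lambda>j. \<Sum>i<n j. measure lam ((T ^^ i) ` A j - B j i)) \<longlonglongrightarrow> 0)"

definition self_joining :: "(real \<Rightarrow> real) \<Rightarrow> (real \<times> real) measure \<Rightarrow> bool" where
  "self_joining T \<sigma> \<longleftrightarrow>
     prob_space \<sigma> \<and> sets \<sigma> = sets (lam \<Otimes>\<^sub>M lam) \<and>
     distr \<sigma> lam fst = lam \<and> distr \<sigma> lam snd = lam \<and>
     distr \<sigma> \<sigma> (\<lambda>(x, y). (T x, T y)) = \<sigma>"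

definition disintegration :: "(real \<times> real) measure \<Rightarrow> (real \<Rightarrow> real measure) \<Rightarrow> bool" where
  "disintegration \<sigma> \<sigma>x \<longleftrightarrow>
     (\<forall>x\<in>{0..1}. prob_space (\<sigma>x x) \<and> sets (\<sigma>x x) = sets lam) \<and>
     (\<forall>B\<in>sets lam. (\<lambda>x. emeasure (\<sigma>x x) B) \<in> borel_measurable lam) \<and>
     (\<forall>A\<in>sets lam. \<forall>B\<in>sets lam.
        emeasure \<sigma> (A \<times> B) = (\<integral>\<^sup>+ x. indicator A x * emeasure (\<sigma>x x) B \<partial>lam))"

definition Rk :: "(real \<Rightarrow> real) \<Rightarrow> (nat \<Rightarrow> nat) \<Rightarrow> (nat \<Rightarrow> real set) \<Rightarrow> nat \<Rightarrow> real set" where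
  "Rk T n A k = (\<Union>i<n k. (T ^^ i) ` A k)"

definition Rtk :: "(real \<Rightarrow> real) \<Rightarrow> (nat \<Rightarrow> nat) \<Rightarrow> (nat \<Rightarrow> real set) \<Rightarrow> nat \<Rightarrow> real set" where
  "Rtk T n A k = (\<Union>i<n k. (T ^^ i) `
      (A k \<inter> Tz T (- int (n k)) ` A k \<inter> Tz T (- 2 * int (n k)) ` A k
           \<inter> Tz T (int (n k)) ` A k \<inter> Tz T (2 * int (n k)) ` A k))"

text \<open>The level l with x in T^l A_k (unique by disjointness).\<close>
definition lvl :: "(real \<Rightarrow> real) \<Rightarrow> (nat \<Rightarrow> nat) \<Rightarrow> (nat \<Rightarrow> real set) \<Rightarrow> nat \<Rightarrow> real \<Rightarrow> nat" where
  "lvl T n A k x = (THE l. l < n k \<and> x \<in> (T ^^ l) ` A k)"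

definition cfun :: "(real \<Rightarrow> real) \<Rightarrow> (real \<Rightarrow> real measure) \<Rightarrow> (nat \<Rightarrow> nat) \<Rightarrow> (nat \<Rightarrow> real set)
                    \<Rightarrow> nat \<Rightarrow> nat \<Rightarrow> real \<Rightarrow> real" where
  "cfun T \<sigma>x n A k i x =
     measure (\<sigma>x x) ((T ^^ ((i + lvl T n A k x) mod n k)) ` A k \<inter> Rk T n A k)"

end

theory Submission
  imports Defs
begin

lemma int_mod_cancel: "((a::int) + i) mod N = (b + i) mod N \<longleftrightarrow> a mod N = b mod N"
proof
  assume h: "(a + i) mod N = (b + i) mod N"
  have "a mod N = ((a + i) mod N + (-i)) mod N" by (simp add: mod_diff_left_eq)
  also have "\<dots> = ((b + i) mod N + (-i)) mod N" using h by simp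
  also have "\<dots> = b mod N" by (simp add: mod_diff_left_eq)
  finally show "a mod N = b mod N" .
next
  assume "a mod N = b mod N" then show "(a + i) mod N = (b + i) mod N"
    by (metis mod_add_left_eq)
qed

lemma arith_key:
  fixes N b c j l L :: nat and i :: int
  assumes "b < N" "c < N" "int L = int l + i" "int c mod int N = (i + int b) mod int N"
  shows "((j + L) mod N = c) \<longleftrightarrow> ((j + l) mod N = b)"
proof -
  have "((j + L) mod N = c) \<longleftrightarrow> int ((j + L) mod N) = int c" by simp
  also have "\<dots> \<longleftrightarrow> (int j + int L) mod int N = int c mod int N"
    using assms(2) by (simp add: zmod_int)
  also have "\<dots> \<longleftrightarrow> ((int j + int l) + i) mod int N = (int b + i) mod int N"
    using assms(3,4) by (simp add: algebra_simps)
  also have "\<dots> \<longleftrightarrow> (int j + int l) mod int N = int b mod int N"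
    by (rule int_mod_cancel)
  also have "\<dots> \<longleftrightarrow> int ((j + l) mod N) = int b"
    using assms(1) by (simp add: zmod_int)
  finally show ?thesis by simp
qed

lemma dist_mod:
  fixes N j j' l :: nat
  assumes "j < N" "j' < N" "(j + l) mod N = (j' + l) mod N" shows "j = j'"
proof -
  have "(int j + int l) mod int N = (int j' + int l) mod int N"
    using assms(3) by (metis of_nat_add zmod_int)
  then have "int j mod int N = int j' mod int N" by (simp add: int_mod_cancel)
  then show ?thesis using assms(1,2) by simp
qed


lemma abstract_bound:
  fixes \<mu> :: "'a measure" and E G :: "nat \<Rightarrow> 'a set"
  assumes fm: "finite_measure \<mu>" and Em: "\<And>j. j < N \<Longrightarrow> E j \<in> sets \<mu>"
    and Gm: "\<And>j. j < N \<Longrightarrow> G j \<in> sets \<mu>" and Rm: "R \<in> sets \<mu>"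
    and dE: "disjoint_family_on E {..<N}" and dG: "disjoint_family_on G {..<N}"
    and eq: "\<And>j. j < N \<Longrightarrow> E j \<inter> R = G j \<inter> R"
  shows "(\<Sum>j<N. \<bar>measure \<mu> (E j) - measure \<mu> (G j)\<bar>) \<le> 2 * measure \<mu> (space \<mu> - R)"
proof -
  interpret finite_measure \<mu> by (rule fm)
  have split: "measure \<mu> X = measure \<mu> (X \<inter> R) + measure \<mu> (X - R)" if "X \<in> sets \<mu>" for X
  proof -
    have "X = (X \<inter> R) \<union> (X - R)" by blast
    then have "measure \<mu> X = measure \<mu> ((X \<inter> R) \<union> (X - R))" by simp
    also have "\<dots> = measure \<mu> (X \<inter> R) + measure \<mu> (X - R)"
      by (rule finite_measure_Union) (use that Rm in auto)
    finally show ?thesis .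
  qed
  have trm: "\<bar>measure \<mu> (E j) - measure \<mu> (G j)\<bar> \<le> measure \<mu> (E j - R) + measure \<mu> (G j - R)"
    if "j < N" for j
    using split[OF Em[OF that]] split[OF Gm[OF that]] eq[OF that] measure_nonneg[of \<mu> "E j - R"]
      measure_nonneg[of \<mu> "G j - R"] by (smt (verit))
  have bnd: "(\<Sum>j<N. measure \<mu> (F j - R)) \<le> measure \<mu> (space \<mu> - R)"
    if Fm: "\<And>j. j < N \<Longrightarrow> F j \<in> sets \<mu>" and dF: "disjoint_family_on F {..<N}" for F
  proof -
    have "(\<Sum>j<N. measure \<mu> (F j - R)) = measure \<mu> (\<Union>j\<in>{..<N}. F j - R)"
    proof (rule finite_measure_finite_Union[symmetric])
      show "(\<lambda>j. F j - R) ` {..<N} \<subseteq> sets \<mu>" using Fm Rm by auto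
      show "disjoint_family_on (\<lambda>j. F j - R) {..<N}"
        using dF unfolding disjoint_family_on_def by blast
    qed simp
    also have "\<dots> \<le> measure \<mu> (space \<mu> - R)"
    proof (rule finite_measure_mono)
      show "(\<Union>j\<in>{..<N}. F j - R) \<subseteq> space \<mu> - R"
        using Fm sets.sets_into_space by blast
    qed (use Rm in auto)
    finally show ?thesis .
  qed
  have "(\<Sum>j<N. \<bar>measure \<mu> (E j) - measure \<mu> (G j)\<bar>)
      \<le> (\<Sum>j<N. measure \<mu> (E j - R) + measure \<mu> (G j - R))"
    by (rule sum_mono) (simp add: trm)
  also have "\<dots> = (\<Sum>j<N. measure \<mu> (E j - R)) + (\<Sum>j<N. measure \<mu> (G j - R))"
    by (simp add: sum.distrib)
  also have "\<dots> \<le> 2 * measure \<mu> (space \<mu> - R)"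
    using bnd[of E, OF Em dE] bnd[of G, OF Gm dG] by simp
  finally show ?thesis .
qed



lemma space_lam: "space lam = {0..1}"
  by (simp add: lam_def space_restrict_space)

lemma sets_lam_sub: "E \<in> sets lam \<Longrightarrow> E \<subseteq> {0..1}"
  using sets.sets_into_space space_lam by blast

context
  fixes T :: "real \<Rightarrow> real"
  assumes bij: "bij_betw T {0..1} {0..1}"
begin

abbreviation "S \<equiv> inv_into {0..1} T"

lemma T_in: "x \<in> {0..1} \<Longrightarrow> T x \<in> {0..1}"
  by (rule bij_betw_apply[OF bij])
lemma S_in: "x \<in> {0..1} \<Longrightarrow> S x \<in> {0..1}"
  by (rule bij_betw_apply[OF bij_betw_inv_into[OF bij]])
lemma ST: "x \<in> {0..1} \<Longrightarrow> S (T x) = x"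
  by (rule bij_betw_inv_into_left[OF bij])
lemma TS: "x \<in> {0..1} \<Longrightarrow> T (S x) = x"
  by (rule bij_betw_inv_into_right[OF bij])

lemma Tpow_in: "x \<in> {0..1} \<Longrightarrow> (T ^^ m) x \<in> {0..1}"
proof (induction m)
  case (Suc m) then show ?case using T_in by simp
qed simp
lemma Spow_in: "x \<in> {0..1} \<Longrightarrow> (S ^^ m) x \<in> {0..1}"
proof (induction m)
  case (Suc m) then show ?case using S_in by simp
qed simp

lemma Tz_in: "x \<in> {0..1} \<Longrightarrow> Tz T i x \<in> {0..1}"
  unfolding Tz_def using Tpow_in Spow_in by (simp del: atLeastAtMost_iff)

lemma Tz_nat: "Tz T (int m) = T ^^ m"
  by (simp add: Tz_def)

lemma Tz_0: "Tz T 0 x = x"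
  by (simp add: Tz_def)

lemma Tz_succ: "x \<in> {0..1} \<Longrightarrow> Tz T (i+1) x = T (Tz T i x)"
proof (cases "0 \<le> i")
  case True
  then have "nat (i+1) = Suc (nat i)" by simp
  then show ?thesis using True by (simp add: Tz_def)
next
  case False
  assume x: "x \<in> {0..1}"
  have "nat (-i) = Suc (nat (-(i+1)))" using False by simp
  then have "Tz T i x = S (Tz T (i+1) x)" using False by (simp add: Tz_def)
  then show ?thesis using TS[OF Tz_in[OF x, of "i+1"]] by metis
qed

lemma Tz_pred: "x \<in> {0..1} \<Longrightarrow> Tz T (i-1) x = S (Tz T i x)"
proof (cases "0 < i")
  case False
  then have "nat (-(i-1)) = Suc (nat (-i))" by simp
  then show ?thesis using False by (simp add: Tz_def)
next
  case True
  assume x: "x \<in> {0..1}"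
  have "nat i = Suc (nat (i-1))" using True by simp
  then have "Tz T i x = T (Tz T (i-1) x)" using True by (simp add: Tz_def)
  then show ?thesis using ST[OF Tz_in[OF x, of "i-1"]] by metis
qed

lemma Tz_add: "x \<in> {0..1} \<Longrightarrow> Tz T (i+j) x = Tz T i (Tz T j x)"
proof (induction i rule: int_induct[where k=0])
  case base
  then show ?case by (simp add: Tz_0)
next
  case (step1 i)
  have "Tz T (i + 1 + j) x = Tz T ((i + j) + 1) x" by (simp add: algebra_simps)
  also have "\<dots> = T (Tz T (i+j) x)" using Tz_succ step1 by simp
  also have "\<dots> = Tz T (i+1) (Tz T j x)" using step1 Tz_succ Tz_in by simp
  finally show ?case .
next
  case (step2 i)
  have "Tz T (i - 1 + j) x = Tz T ((i + j) - 1) x" by (simp add: algebra_simps)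
  also have "\<dots> = S (Tz T (i+j) x)" using Tz_pred step2 by simp
  also have "\<dots> = Tz T (i-1) (Tz T j x)" using step2 Tz_pred Tz_in by simp
  finally show ?case .
qed

lemma Tz_inv: "x \<in> {0..1} \<Longrightarrow> Tz T (-i) (Tz T i x) = x"
  using Tz_add[of x "-i" i] by (simp add: Tz_0)

end

context
  fixes T :: "real \<Rightarrow> real"
  assumes bij: "bij_betw T {0..1} {0..1}"
    and Tm: "T \<in> lam \<rightarrow>\<^sub>M lam" and Sm: "inv_into {0..1} T \<in> lam \<rightarrow>\<^sub>M lam"
begin

lemma img_T: assumes E: "E \<in> sets lam" shows "T ` E \<in> sets lam"
proof -
  have sub: "E \<subseteq> {0..1}" using E sets_lam_sub by blast
  have "T ` E = inv_into {0..1} T -` E \<inter> space lam"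
  proof (intro equalityI subsetI)
    fix y assume "y \<in> T ` E"
    then obtain e where e: "e \<in> E" "y = T e" by blast
    then have "e \<in> {0..1}" using sub by blast
    then show "y \<in> inv_into {0..1} T -` E \<inter> space lam"
      using e ST[OF bij] T_in[OF bij] space_lam by simp
  next
    fix y assume y: "y \<in> inv_into {0..1} T -` E \<inter> space lam"
    then have "y = T (inv_into {0..1} T y)" using TS[OF bij] space_lam by simp
    then show "y \<in> T ` E" using y by blast
  qed
  then show ?thesis using measurable_sets[OF Sm E] by simp
qed

lemma img_S: assumes E: "E \<in> sets lam" shows "inv_into {0..1} T ` E \<in> sets lam"
proof -
  have sub: "E \<subseteq> {0..1}" using E sets_lam_sub by blast
  have "inv_into {0..1} T ` E = T -` E \<inter> space lam"
  proof (intro equalityI subsetI)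
    fix y assume "y \<in> inv_into {0..1} T ` E"
    then obtain e where e: "e \<in> E" "y = inv_into {0..1} T e" by blast
    then have "e \<in> {0..1}" using sub by blast
    then show "y \<in> T -` E \<inter> space lam"
      using e TS[OF bij] S_in[OF bij] space_lam by simp
  next
    fix y assume y: "y \<in> T -` E \<inter> space lam"
    then have "y = inv_into {0..1} T (T y)" using ST[OF bij] space_lam by simp
    then show "y \<in> inv_into {0..1} T ` E" using y by blast
  qed
  then show ?thesis using measurable_sets[OF Tm E] by simp
qed

lemma img_Tz: "E \<in> sets lam \<Longrightarrow> Tz T i ` E \<in> sets lam"
proof (induction i rule: int_induct[where k=0])
  case base
  then show ?case by (simp add: Tz_0[OF bij])
next
  case (step1 i)
  have "Tz T (i+1) ` E = T ` (Tz T i ` E)"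
    unfolding image_image
  proof (rule image_cong[OF refl])
    fix e assume "e \<in> E"
    then have "e \<in> {0..1}" using sets_lam_sub[OF step1(3)] by blast
    then show "Tz T (i+1) e = T (Tz T i e)" by (rule Tz_succ[OF bij])
  qed
  then show ?case using img_T step1 by simp
next
  case (step2 i)
  have "Tz T (i-1) ` E = inv_into {0..1} T ` (Tz T i ` E)"
    unfolding image_image
  proof (rule image_cong[OF refl])
    fix e assume "e \<in> E"
    then have "e \<in> {0..1}" using sets_lam_sub[OF step2(3)] by blast
    then show "Tz T (i-1) e = (inv_into {0..1} T) (Tz T i e)" by (rule Tz_pred[OF bij])
  qed
  then show ?case using img_S step2 by simp
qed

lemma Tz_meas_inv:
  assumes H: "\<forall>x\<in>{0..1}. \<forall>E\<in>sets lam. measure (\<sigma>x (T x)) (T ` E) = measure (\<sigma>x x) E"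
  shows "x \<in> {0..1} \<Longrightarrow> E \<in> sets lam \<Longrightarrow>
    measure (\<sigma>x (Tz T i x)) (Tz T i ` E) = measure (\<sigma>x x) E"
proof (induction i rule: int_induct[where k=0])
  case base
  then show ?case by (simp add: Tz_0[OF bij])
next
  case (step1 i)
  have e: "Tz T (i+1) ` E = T ` (Tz T i ` E)"
    unfolding image_image
  proof (rule image_cong[OF refl])
    fix e assume "e \<in> E"
    then have "e \<in> {0..1}" using sets_lam_sub[OF step1(4)] by blast
    then show "Tz T (i+1) e = T (Tz T i e)" by (rule Tz_succ[OF bij])
  qed
  have "measure (\<sigma>x (Tz T (i+1) x)) (Tz T (i+1) ` E)
      = measure (\<sigma>x (T (Tz T i x))) (T ` (Tz T i ` E))"
    using e Tz_succ[OF bij step1(3)] by simp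
  also have "\<dots> = measure (\<sigma>x (Tz T i x)) (Tz T i ` E)"
    using H Tz_in[OF bij step1(3)] img_Tz[OF step1(4)] by simp
  finally show ?case using step1 by simp
next
  case (step2 i)
  have e: "Tz T (i-1) ` E = inv_into {0..1} T ` (Tz T i ` E)"
    unfolding image_image
  proof (rule image_cong[OF refl])
    fix e assume "e \<in> E"
    then have "e \<in> {0..1}" using sets_lam_sub[OF step2(4)] by blast
    then show "Tz T (i-1) e = (inv_into {0..1} T) (Tz T i e)" by (rule Tz_pred[OF bij])
  qed
  define y where "y = Tz T i x"
  define F where "F = Tz T i ` E"
  have y: "y \<in> {0..1}" unfolding y_def using Tz_in[OF bij step2(3)] .
  have F: "F \<in> sets lam" unfolding F_def using img_Tz[OF step2(4)] .
  have Sy: "inv_into {0..1} T y \<in> {0..1}" using S_in[OF bij y] .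
  have SF: "inv_into {0..1} T ` F \<in> sets lam" using img_S[OF F] .
  have TSF: "T ` (inv_into {0..1} T ` F) = F"
    unfolding image_image
  proof -
    have "(\<lambda>x. T (inv_into {0..1} T x)) ` F = id ` F"
    proof (rule image_cong[OF refl])
      fix e assume "e \<in> F"
      then have "e \<in> {0..1}" using sets_lam_sub[OF F] by blast
      then show "T (inv_into {0..1} T e) = id e" using TS[OF bij] by simp
    qed
    then show "(\<lambda>x. T (inv_into {0..1} T x)) ` F = F" by simp
  qed
  have "measure (\<sigma>x (Tz T (i-1) x)) (Tz T (i-1) ` E)
      = measure (\<sigma>x (inv_into {0..1} T y)) (inv_into {0..1} T ` F)"
    using e Tz_pred[OF bij step2(3)] unfolding y_def F_def by simp
  also have "\<dots> = measure (\<sigma>x (T (inv_into {0..1} T y))) (T ` (inv_into {0..1} T ` F))"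
    using H Sy SF by simp
  also have "\<dots> = measure (\<sigma>x y) F" using TSF TS[OF bij y] by simp
  finally show ?case using step2 unfolding y_def F_def by simp
qed

end


theorem mainTheorem4:
  fixes T :: "real \<Rightarrow> real" and n :: "nat \<Rightarrow> nat" and A :: "nat \<Rightarrow> real set"
    and \<sigma> :: "(real \<times> real) measure" and \<sigma>x :: "real \<Rightarrow> real measure"
    and k l :: nat and x :: real and i :: int
  assumes "invertible_mpt T" and "ergodic T" and "rigid_rank1 T n A"
    and "self_joining T \<sigma>" and "disintegration \<sigma> \<sigma>x"
    and "\<forall>x\<in>{0..1}. \<forall>E\<in>sets lam. measure (\<sigma>x (T x)) (T ` E) = measure (\<sigma>x x) E"
    and "l < n k" and "x \<in> (T ^^ l) ` A k"
    and "- int l \<le> i" and "i < int (n k) - int l"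
  shows "(\<Sum>j<n k. \<bar>cfun T \<sigma>x n A k j x - cfun T \<sigma>x n A k j (Tz T i x)\<bar>)
           \<le> 2 * measure (\<sigma>x x) ({0..1} - Rtk T n A k)"
proof -
  have bij: "bij_betw T {0..1} {0..1}" and Tm: "T \<in> lam \<rightarrow>\<^sub>M lam"
    and Sm: "inv_into {0..1} T \<in> lam \<rightarrow>\<^sub>M lam"
    using assms(1) unfolding invertible_mpt_def by auto
  have Bm: "A k \<in> sets lam" and disj: "disjoint_family_on (\<lambda>i. (T ^^ i) ` A k) {..<n k}"
    using assms(3) unfolding rigid_rank1_def by auto
  have dis: "\<And>z. z \<in> {0..1} \<Longrightarrow> prob_space (\<sigma>x z) \<and> sets (\<sigma>x z) = sets lam"
    using assms(5) unfolding disintegration_def by auto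
  have Bsub: "A k \<subseteq> {0..1}" using sets_lam_sub[OF Bm] .
  have lev_eq: "(T ^^ c) ` A k = Tz T (int c) ` A k" for c by (simp add: Tz_nat[OF bij])
  have lev_m: "(T ^^ c) ` A k \<in> sets lam" for c
    using img_Tz[OF bij Tm Sm Bm] lev_eq by simp
  have uniq: "c = c'" if "c < n k" "c' < n k" "z \<in> (T ^^ c) ` A k" "z \<in> (T ^^ c') ` A k" for c c' z
    using disj that unfolding disjoint_family_on_def by blast
  have lvl_eq: "lvl T n A k z = c" if "c < n k" "z \<in> (T ^^ c) ` A k" for c z
    unfolding lvl_def
  proof (rule the_equality)
    show "c < n k \<and> z \<in> (T ^^ c) ` A k" using that by simp
    fix c' assume "c' < n k \<and> z \<in> (T ^^ c') ` A k"
    then show "c' = c" using uniq that by blast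
  qed
  have Tz_lev: "Tz T m a \<in> (T ^^ nat m) ` A k" if "a \<in> A k" "0 \<le> m" for a m
  proof -
    have "Tz T m = T ^^ nat m" using that(2) Tz_nat[OF bij, of "nat m"] by simp
    then show ?thesis using that(1) by simp
  qed
  have Rm: "Rk T n A k \<in> sets lam"
    unfolding Rk_def using lev_m by (intro sets.finite_UN) auto
  define W where "W = A k \<inter> Tz T (- int (n k)) ` A k \<inter> Tz T (- 2 * int (n k)) ` A k
           \<inter> Tz T (int (n k)) ` A k \<inter> Tz T (2 * int (n k)) ` A k"
  have Wm: "W \<in> sets lam" unfolding W_def
    using Bm img_Tz[OF bij Tm Sm Bm] by (intro sets.Int) auto
  have Rt_eq: "Rtk T n A k = (\<Union>c<n k. (T ^^ c) ` W)" unfolding Rtk_def W_def by simp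
  have Rtm: "Rtk T n A k \<in> sets lam"
  proof -
    have "(T ^^ c) ` W \<in> sets lam" for c
      using img_Tz[OF bij Tm Sm Wm, of "int c"] by (simp add: Tz_nat[OF bij])
    then show ?thesis unfolding Rt_eq by (intro sets.finite_UN) auto
  qed
  obtain a where a: "a \<in> A k" "x = (T ^^ l) a" using assms(8) by blast
  have aO: "a \<in> {0..1}" using a(1) Bsub by blast
  have xO: "x \<in> {0..1}" using a Tpow_in[OF bij aO] by simp
  define \<mu> where "\<mu> = \<sigma>x x"
  have \<mu>p: "prob_space \<mu>" and \<mu>s: "sets \<mu> = sets lam" using dis[OF xO] unfolding \<mu>_def by auto
  have \<mu>f: "finite_measure \<mu>" using \<mu>p by (simp add: prob_space_def)
  have \<mu>sp: "space \<mu> = {0..1}" using sets_eq_imp_space_eq[OF \<mu>s] space_lam by simp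
  define y where "y = Tz T i x"
  define L where "L = nat (i + int l)"
  have L: "int L = i + int l" "L < n k" using assms(9,10) unfolding L_def by auto
  have y_eq: "y = Tz T (i + int l) a"
    unfolding y_def a(2) using Tz_add[OF bij aO, of i "int l"] Tz_nat[OF bij, of l] by simp
  have yL: "y \<in> (T ^^ L) ` A k" using Tz_lev[OF a(1), of "i + int l"] assms(9)
    unfolding y_eq L_def by simp
  have lx: "lvl T n A k x = l" using lvl_eq[OF assms(7,8)] .
  have ly: "lvl T n A k y = L" using lvl_eq[OF L(2) yL] .
  define E where "E j = (T ^^ ((j + l) mod n k)) ` A k \<inter> Rk T n A k" for j
  define F where "F j = (T ^^ ((j + L) mod n k)) ` A k \<inter> Rk T n A k" for j
  define G where "G j = Tz T (- i) ` F j" for j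
  have nk: "0 < n k" using assms(7) by simp
  have Em: "E j \<in> sets lam" for j unfolding E_def using lev_m Rm by auto
  have Fm: "F j \<in> sets lam" for j unfolding F_def using lev_m Rm by auto
  have Gm: "G j \<in> sets lam" for j unfolding G_def using img_Tz[OF bij Tm Sm Fm] by simp
  have TG: "Tz T i ` G j = F j" for j
  proof -
    have "Tz T i ` G j = (\<lambda>f. Tz T i (Tz T (-i) f)) ` F j" unfolding G_def image_image ..
    also have "\<dots> = id ` F j"
    proof (rule image_cong[OF refl])
      fix f assume "f \<in> F j"
      then have "f \<in> {0..1}" using sets_lam_sub[OF Fm] by blast
      then show "Tz T i (Tz T (- i) f) = id f" using Tz_inv[OF bij, of f "-i"] by simp
    qed
    finally show ?thesis by simp
  qed
  have cx: "cfun T \<sigma>x n A k j x = measure \<mu> (E j)" for j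
    unfolding cfun_def lx E_def \<mu>_def ..
  have cy: "cfun T \<sigma>x n A k j y = measure \<mu> (G j)" for j
  proof -
    have "cfun T \<sigma>x n A k j y = measure (\<sigma>x y) (F j)"
      unfolding cfun_def ly F_def ..
    also have "\<dots> = measure (\<sigma>x (Tz T i x)) (Tz T i ` G j)" unfolding TG y_def ..
    also have "\<dots> = measure \<mu> (G j)"
      unfolding \<mu>_def using Tz_meas_inv[OF bij Tm Sm assms(6) xO Gm] .
    finally show ?thesis .
  qed
  have inG: "z \<in> G j \<longleftrightarrow> z \<in> {0..1} \<and> Tz T i z \<in> F j" for z j
  proof
    assume "z \<in> G j"
    then obtain f where f: "f \<in> F j" "z = Tz T (-i) f" unfolding G_def by blast
    have fO: "f \<in> {0..1}" using f(1) sets_lam_sub[OF Fm] by blast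
    have "Tz T i z = f" using f(2) Tz_inv[OF bij fO, of "-i"] by simp
    then show "z \<in> {0..1} \<and> Tz T i z \<in> F j" using f Tz_in[OF bij fO] by simp
  next
    assume h: "z \<in> {0..1} \<and> Tz T i z \<in> F j"
    then have "z = Tz T (-i) (Tz T i z)" using Tz_inv[OF bij, of z i] by simp
    then show "z \<in> G j" unfolding G_def using h by blast
  qed
  have dE: "disjoint_family_on E {..<n k}"
    unfolding disjoint_family_on_def
  proof (intro ballI impI)
    fix j j' assume j: "j \<in> {..<n k}" "j' \<in> {..<n k}" "j \<noteq> j'"
    have "(j + l) mod n k \<noteq> (j' + l) mod n k" using dist_mod[of j "n k" j' l] j by auto
    then show "E j \<inter> E j' = {}"
      using uniq[of "(j + l) mod n k" "(j' + l) mod n k"] mod_less_divisor[OF nk]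
      unfolding E_def by blast
  qed
  have dG: "disjoint_family_on G {..<n k}"
    unfolding disjoint_family_on_def
  proof (intro ballI impI)
    fix j j' assume j: "j \<in> {..<n k}" "j' \<in> {..<n k}" "j \<noteq> j'"
    have "(j + L) mod n k \<noteq> (j' + L) mod n k" using dist_mod[of j "n k" j' L] j by auto
    then have "F j \<inter> F j' = {}"
      using uniq[of "(j + L) mod n k" "(j' + L) mod n k"] mod_less_divisor[OF nk]
      unfolding F_def by blast
    then show "G j \<inter> G j' = {}" using inG by blast
  qed
  have key: "E j \<inter> Rtk T n A k = G j \<inter> Rtk T n A k" if j: "j < n k" for j
  proof (intro equalityI subsetI)
    {
      fix z assume z: "z \<in> Rtk T n A k"
      then obtain b w where b: "b < n k" "z = (T ^^ b) w" "w \<in> W" unfolding Rt_eq by blast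
      have wA: "w \<in> A k" using b(3) unfolding W_def by blast
      have wO: "w \<in> {0..1}" using wA Bsub by blast
      have zO: "z \<in> {0..1}" using b(2) Tpow_in[OF bij wO] by simp
      have zlev: "z \<in> (T ^^ b) ` A k" using b wA by blast
      have zR: "z \<in> Rk T n A k" unfolding Rk_def using zlev b(1) by blast
      have Ez: "z \<in> E j \<longleftrightarrow> (j + l) mod n k = b"
      proof
        assume "z \<in> E j"
        then show "(j + l) mod n k = b" unfolding E_def using uniq[OF _ b(1) _ zlev] nk by auto
      next
        assume "(j + l) mod n k = b" then show "z \<in> E j" unfolding E_def using zlev zR by simp
      qed
      have Tzz: "Tz T i z = Tz T (i + int b) w"
        using b(2) Tz_add[OF bij wO, of i "int b"] Tz_nat[OF bij, of b] by simp
      obtain c where c: "c < n k" "Tz T i z \<in> (T ^^ c) ` A k" "int c mod int (n k) = (i + int b) mod int (n k)"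
      proof (cases "0 \<le> i + int b \<and> i + int b < int (n k)")
        case True
        show ?thesis
        proof (rule that[of "nat (i + int b)"])
          show "nat (i + int b) < n k" using True by auto
          show "Tz T i z \<in> (T ^^ nat (i + int b)) ` A k" using Tzz Tz_lev[OF wA] True by simp
          show "int (nat (i + int b)) mod int (n k) = (i + int b) mod int (n k)" using True by simp
        qed
      next
        case False
        show ?thesis
        proof (cases "0 \<le> i + int b")
          case True
          then have ge: "i + int b \<ge> int (n k)" using False by simp
          obtain a1 where a1: "a1 \<in> A k" "w = Tz T (- int (n k)) a1" using b(3) unfolding W_def by blast
          have a1O: "a1 \<in> {0..1}" using a1(1) Bsub by blast
          have "Tz T (i + int b) w = Tz T (i + int b - int (n k)) (Tz T (int (n k)) w)"
            using Tz_add[OF bij wO, of "i + int b - int (n k)" "int (n k)"] by simp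
          also have "Tz T (int (n k)) w = a1" using a1(2) Tz_inv[OF bij a1O, of "- int (n k)"] by simp
          finally have eq: "Tz T i z = Tz T (i + int b - int (n k)) a1" using Tzz by simp
          show ?thesis
          proof (rule that[of "nat (i + int b - int (n k))"])
            show "nat (i + int b - int (n k)) < n k" using ge assms(10) b(1) by auto
            show "Tz T i z \<in> (T ^^ nat (i + int b - int (n k))) ` A k"
              using eq Tz_lev[OF a1(1)] ge by simp
            have "int (nat (i + int b - int (n k))) = (i + int b) + (-1) * int (n k)" using ge by simp
            then show "int (nat (i + int b - int (n k))) mod int (n k) = (i + int b) mod int (n k)"
              by (metis mod_mult_self1 mult.commute)
          qed
        next
          case neg: False
          obtain a2 where a2: "a2 \<in> A k" "w = Tz T (int (n k)) a2" using b(3) unfolding W_def by blast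
          have a2O: "a2 \<in> {0..1}" using a2(1) Bsub by blast
          have "Tz T (i + int b) w = Tz T (i + int b + int (n k)) (Tz T (- int (n k)) w)"
            using Tz_add[OF bij wO, of "i + int b + int (n k)" "- int (n k)"] by simp
          also have "Tz T (- int (n k)) w = a2" using a2(2) Tz_inv[OF bij a2O, of "int (n k)"] by simp
          finally have eq: "Tz T i z = Tz T (i + int b + int (n k)) a2" using Tzz by simp
          have ge0: "0 \<le> i + int b + int (n k)" using assms(9,7) by simp
          show ?thesis
          proof (rule that[of "nat (i + int b + int (n k))"])
            show "nat (i + int b + int (n k)) < n k" using neg ge0 by (simp add: nat_less_iff)
            show "Tz T i z \<in> (T ^^ nat (i + int b + int (n k))) ` A k"
              using eq Tz_lev[OF a2(1)] ge0 by simp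
            have "int (nat (i + int b + int (n k))) = (i + int b) + 1 * int (n k)" using ge0 by simp
            then show "int (nat (i + int b + int (n k))) mod int (n k) = (i + int b) mod int (n k)"
              by (metis mod_mult_self1 mult.commute)
          qed
        qed
      qed
      have Fz: "Tz T i z \<in> F j \<longleftrightarrow> (j + L) mod n k = c"
      proof
        assume "Tz T i z \<in> F j"
        then show "(j + L) mod n k = c" unfolding F_def using uniq[OF _ c(1) _ c(2)] nk by auto
      next
        assume h: "(j + L) mod n k = c"
        have "Tz T i z \<in> Rk T n A k" unfolding Rk_def using c(1,2) by blast
        then show "Tz T i z \<in> F j" unfolding F_def using h c(2) by simp
      qed
      have ar: "((j + L) mod n k = c) \<longleftrightarrow> ((j + l) mod n k = b)"
        by (rule arith_key[OF b(1) c(1) _ c(3)]) (use L(1) in simp)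
      have "z \<in> E j \<longleftrightarrow> z \<in> G j" using Ez Fz ar inG zO by simp
    }
    note * = this
    show "z \<in> G j \<inter> Rtk T n A k" if "z \<in> E j \<inter> Rtk T n A k" for z using * that by blast
    show "z \<in> E j \<inter> Rtk T n A k" if "z \<in> G j \<inter> Rtk T n A k" for z using * that by blast
  qed
  have "(\<Sum>j<n k. \<bar>measure \<mu> (E j) - measure \<mu> (G j)\<bar>) \<le> 2 * measure \<mu> (space \<mu> - Rtk T n A k)"
    by (rule abstract_bound[OF \<mu>f]) (use Em Gm Rtm \<mu>s dE dG key in auto)
  then show ?thesis unfolding cx cy[unfolded y_def] \<mu>sp by (simp add: \<mu>_def)
qed

end
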